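(* Under the degree-corrected stochastic block model $DCSBM(n,P,\Theta,Z)$ with regularizer $\tau\ge0$, the matrix $\tilde X^*$ has exactly $K$ distinct rows, and for any nodes $i\ne j$ with $g_i=g_j$, the $i$-th row of $\tilde X^*$ equals the $j$-th row of $\tilde X^*$.
   Context: $n$ nodes, each in exactly one of $K$ nonempty communities, $g_i$ the community of node $i$; $Z\in\{0,1\}^{n\times K}$ with $Z_{ik}=1$ iff $g_i=k$. $P$ is a $K\times K$ symmetric, nonnegative, nonsingular, irreducible matrix; $\theta\in\mathbb{R}^n$ has positive entries, $\Theta=\mathrm{diag}(\theta)$, $\Omega=\Theta ZPZ'\Theta$. Let $\mathscr D$ be diagonal with $\mathscr D_{ii}=\sum_{j=1}^n\Omega_{ij}$, $\mathscr D_\tau=\mathscr D+\tau I$, $\mathscr L_\tau=\mathscr D_\tau^{-1/2}\Omega\mathscr D_\tau^{-1/2}$, and let $N^{\mathscr L_\tau}$ be the column-normalized matrix of $\mathscr L_\tau$ (its $i$-th column is the $i$-th column of $\mathscr L_\tau$ divided by its Euclidean norm). $N^{\mathscr L_\tau}$ has exactly $K$ nonzero eigenvalues, all real. Let $E_{N^{\mathscr L_\tau}}$ be the $K\times K$ diagonal matrix of these nonzero eigenvalues and $V_{N^{\mathscr L_\tau}}$ the $n\times K$ matrix of corresponding unit-norm right eigenvectors; $\tilde X=V_{N^{\mathscr L_\tau}}E_{N^{\mathscr L_\tau}}$, and $\tilde X^*$ is obtained by normalizing each row of $\tilde X$ to unit Euclidean norm. *)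

theory Defs
  imports "HOL-Analysis.Analysis"
begin

text \<open>Nodes are indexed by a finite type 'n (n = CARD('n)), communities by a
finite type 'k (K = CARD('k)).\<close>

definition diag_mat :: "('i::finite \<Rightarrow> real) \<Rightarrow> real^'i^'i" where
  "diag_mat d = (\<chi> i j. if i = j then d i else 0)"

definition memb_mat :: "('n::finite \<Rightarrow> 'k::finite) \<Rightarrow> real^'k^'n" where
  "memb_mat g = (\<chi> i k. if g i = k then 1 else 0)"

text \<open>Irreducible matrix: not permutation-similar to a block upper triangular
matrix, i.e. there is no nonempty proper index set I closed in the sense that
A i j = 0 for all i in I, j not in I.\<close>
definition irreducible_mat :: "real^'k^'k \<Rightarrow> bool" where
  "irreducible_mat A \<longleftrightarrow>
     \<not> (\<exists>I. I \<noteq> {} \<and> I \<noteq> UNIV \<and> (\<forall>i\<in>I. \<forall>j. j \<notin> I \<longrightarrow> A$i$j = 0))"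

definition Omega_mat :: "('n::finite \<Rightarrow> real) \<Rightarrow> ('n \<Rightarrow> 'k::finite) \<Rightarrow> real^'k^'k \<Rightarrow> real^'n^'n" where
  "Omega_mat \<theta> g P =
     diag_mat \<theta> ** memb_mat g ** P ** transpose (memb_mat g) ** diag_mat \<theta>"

definition degree_mat :: "real^'n^'n \<Rightarrow> real^'n^'n" where
  "degree_mat \<Omega> = diag_mat (\<lambda>i. \<Sum>j\<in>UNIV. \<Omega>$i$j)"

definition reg_laplacian :: "real \<Rightarrow> real^'n^'n \<Rightarrow> real^'n^'n" where
  "reg_laplacian \<tau> \<Omega> =
     (let D\<tau> = degree_mat \<Omega> + \<tau> *\<^sub>R mat 1;
          S = diag_mat (\<lambda>i. 1 / sqrt (D\<tau>$i$i))
      in S ** \<Omega> ** S)"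

definition col_normalize :: "real^'m^'n \<Rightarrow> real^'m^'n" where
  "col_normalize A = (\<chi> i j. A$i$j / norm (column j A))"

definition row_normalize :: "real^'m^'n \<Rightarrow> real^'m^'n" where
  "row_normalize A = (\<chi> i j. A$i$j / norm (row i A))"

end

theory Submission
  imports Defs
begin

lemma mm_entry: "(A ** B) $ i $ j = (\<Sum>k\<in>UNIV. A $ i $ k * B $ k $ j)"
  by (simp add: matrix_matrix_mult_def)

lemma diag_diag: "diag_mat d $ i $ i = d i"
  by (simp add: diag_mat_def)

lemma diag_left: "(diag_mat d ** M) $ i $ j = d i * M $ i $ j"
proof -
  have "(diag_mat d ** M) $ i $ j = (\<Sum>k\<in>UNIV. if k = i then d i * M $ k $ j else 0)"
    unfolding diag_mat_def matrix_matrix_mult_def vec_lambda_beta by (intro sum.cong) auto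
  then show ?thesis by simp
qed

lemma diag_right: "(M ** diag_mat d) $ i $ j = M $ i $ j * d j"
proof -
  have "(M ** diag_mat d) $ i $ j = (\<Sum>k\<in>UNIV. if k = j then M $ i $ k * d j else 0)"
    unfolding diag_mat_def matrix_matrix_mult_def vec_lambda_beta by (intro sum.cong) auto
  then show ?thesis by simp
qed

lemma dm_left: "((diag_mat d ** memb_mat g) ** P) $ i $ j = d i * P $ g i $ j"
proof -
  have e: "(diag_mat d ** memb_mat g) $ i $ k = (if g i = k then d i else 0)" for k
    by (simp add: diag_left memb_mat_def)
  have "((diag_mat d ** memb_mat g) ** P) $ i $ j = (\<Sum>k\<in>UNIV. if k = g i then d i * P $ k $ j else 0)"
    unfolding mm_entry[of "diag_mat d ** memb_mat g"] e by (intro sum.cong) auto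
  then show ?thesis by simp
qed

lemma memb_right: "(M ** transpose (memb_mat g)) $ i $ j = M $ i $ g j"
proof -
  have "(M ** transpose (memb_mat g)) $ i $ j = (\<Sum>k\<in>UNIV. if k = g j then M $ i $ k else 0)"
    unfolding memb_mat_def transpose_def matrix_matrix_mult_def vec_lambda_beta by (intro sum.cong) auto
  then show ?thesis by simp
qed

lemma Omega_entry: "Omega_mat \<theta> g P $ i $ j = \<theta> i * P $ g i $ g j * \<theta> j"
  unfolding Omega_mat_def
  by (simp add: diag_right memb_right dm_left)

lemma lap_entry: "reg_laplacian \<tau> \<Omega> $ i $ j =
   1 / sqrt ((\<Sum>j\<in>UNIV. \<Omega>$i$j) + \<tau>) * \<Omega> $ i $ j * (1 / sqrt ((\<Sum>l\<in>UNIV. \<Omega>$j$l) + \<tau>))"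
  unfolding reg_laplacian_def Let_def
  by (simp add: diag_right diag_left degree_mat_def diag_diag mat_def)

theorem lemma6:
  fixes g :: "'n::finite \<Rightarrow> 'k::finite"
    and P :: "real^'k^'k"
    and \<theta> :: "'n \<Rightarrow> real"
    and \<tau> :: real
    and V :: "real^'k^'n"
    and lam :: "'k \<Rightarrow> real"
  assumes comm_nonempty: "surj g"
    and P_sym: "transpose P = P"
    and P_nonneg: "\<forall>k l. 0 \<le> P$k$l"
    and P_nonsing: "invertible P"
    and P_irred: "irreducible_mat P"
    and theta_pos: "\<forall>i. 0 < \<theta> i"
    and tau_nonneg: "0 \<le> \<tau>"
    and eig_nonzero: "\<forall>k. lam k \<noteq> 0"
    and eig_vec: "\<forall>k. col_normalize (reg_laplacian \<tau> (Omega_mat \<theta> g P)) *v column k V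
                        = lam k *\<^sub>R column k V"
    and eig_unit: "\<forall>k. norm (column k V) = 1"
    and eig_indep: "rank V = CARD('k)"
  shows "card (rows (row_normalize (V ** diag_mat lam))) = CARD('k)
       \<and> (\<forall>i j. i \<noteq> j \<longrightarrow> g i = g j \<longrightarrow>
              row i (row_normalize (V ** diag_mat lam)) = row j (row_normalize (V ** diag_mat lam)))"
proof -
  define \<Omega> where "\<Omega> = Omega_mat \<theta> g P"
  define a where "a i = \<theta> i / sqrt ((\<Sum>j\<in>UNIV. \<Omega>$i$j) + \<tau>)" for i
  define L where "L = reg_laplacian \<tau> \<Omega>"
  define N where "N = col_normalize L"
  define h where "h k j = P$k$(g j) * a j / norm (column j L)" for k j
  define R :: "real^'k^'k" where "R = (\<chi> l k. \<Sum>j\<in>UNIV. h l j * V$j$k)"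
  define X where "X = V ** diag_mat lam"
  have apos: "a i > 0" for i
  proof -
    have "\<exists>l. P$(g i)$l \<noteq> 0"
    proof (rule ccontr)
      assume "\<not> ?thesis"
      then have "row (g i) P = 0" by (simp add: row_def vec_eq_iff)
      then have "det P = 0" by (rule det_zero_row)
      with P_nonsing show False by (simp add: invertible_det_nz)
    qed
    then obtain l where l: "P$(g i)$l \<noteq> 0" by blast
    obtain j where j: "g j = l" using comm_nonempty by (metis surjD)
    have "0 < (\<Sum>j\<in>UNIV. \<Omega>$i$j)"
    proof -
      have "0 < \<Omega>$i$j" using l j P_nonneg theta_pos
        by (simp add: \<Omega>_def Omega_entry) (metis less_eq_real_def mult_pos_pos)
      moreover have "\<forall>j\<in>UNIV. 0 \<le> \<Omega>$i$j" using P_nonneg theta_pos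
        by (simp add: \<Omega>_def Omega_entry less_imp_le)
      ultimately show ?thesis by (intro sum_pos2[of UNIV j]) auto
    qed
    then show ?thesis using theta_pos tau_nonneg by (simp add: a_def)
  qed
  have Lent: "L$i$j = a i * P$(g i)$(g j) * a j" for i j
    unfolding L_def lap_entry a_def by (simp add: \<Omega>_def Omega_entry)
  have Nent: "N$i$j = a i * h (g i) j" for i j
    unfolding N_def col_normalize_def h_def by (simp add: Lent)
  have Vent: "V$i$k = a i * R$(g i)$k / lam k" for i k
  proof -
    have "(N *v column k V)$i = lam k * V$i$k"
      using eig_vec by (simp add: N_def L_def \<Omega>_def column_def)
    moreover have "(N *v column k V)$i = a i * R$(g i)$k"
      by (simp add: matrix_vector_mult_def Nent R_def column_def sum_distrib_left mult.assoc)
    ultimately show ?thesis using eig_nonzero by (simp add: field_simps)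
  qed
  have Xent: "X$i$k = a i * R$(g i)$k" for i k
    using eig_nonzero by (simp add: X_def diag_right Vent)
  have rowX: "row i X = a i *\<^sub>R row (g i) R" for i
    by (simp add: vec_eq_iff row_def Xent)
  define rn where "rn l = (\<chi> k. R$l$k / norm (row l R))" for l
  have rowXs: "row i (row_normalize X) = rn (g i)" for i
  proof -
    have "norm (row i X) = a i * norm (row (g i) R)"
      using apos[of i] by (simp add: rowX)
    then show ?thesis using apos[of i]
      by (simp add: vec_eq_iff row_def row_normalize_def rn_def Xent)
  qed
  define M :: "real^'k^'n" where "M = (\<chi> i l. if g i = l then a i else 0)"
  have "V = (M ** R) ** diag_mat (\<lambda>k. 1 / lam k)"
  proof -
    have "(M ** R)$i$k = a i * R$(g i)$k" for i k
    proof -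
      have "(M ** R)$i$k = (\<Sum>l\<in>UNIV. if l = g i then a i * R$l$k else 0)"
        unfolding mm_entry[of M] unfolding M_def vec_lambda_beta by (intro sum.cong) auto
      then show ?thesis by simp
    qed
    then show ?thesis by (simp add: vec_eq_iff diag_right Vent)
  qed
  then have "rank V \<le> rank R"
    by (metis le_trans rank_mul_le_left rank_mul_le_right)
  then have rkR: "rank (transpose R) = CARD('k)"
    using eig_indep rank_bound[of R] by (simp add: rank_transpose)
  then have injR: "inj ((*v) (transpose R))" by (simp add: full_rank_injective)
  have rowR: "transpose R *v axis l 1 = row l R" for l
    by (simp add: matrix_vector_mult_basis)
  have nz: "norm (row l R) \<noteq> 0" for l
  proof
    assume "norm (row l R) = 0"
    then have "transpose R *v axis l 1 = transpose R *v 0" using rowR[of l] by simp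
    then have "axis l (1::real) = 0" using injR by (meson injD)
    then show False by (simp add: axis_eq_0_iff)
  qed
  have "inj rn"
  proof (rule injI, rule ccontr)
    fix l l' assume eq: "rn l = rn l'" and ne: "l \<noteq> l'"
    define c where "c = norm (row l R) / norm (row l' R)"
    have "row l R = c *\<^sub>R row l' R"
    proof -
      have "R$l$k = c * R$l'$k" for k
      proof -
        have "R$l$k / norm (row l R) = R$l'$k / norm (row l' R)"
          using eq by (simp add: rn_def vec_eq_iff)
        then show ?thesis using nz[of l] nz[of l'] by (simp add: c_def field_simps)
      qed
      then show ?thesis by (simp add: vec_eq_iff row_def)
    qed
    then have "transpose R *v axis l 1 = transpose R *v (c *\<^sub>R axis l' 1)"
      using rowR[of l] rowR[of l'] by (simp only: matrix_vector_mult_scaleR)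
    then have "axis l (1::real) = c *\<^sub>R axis l' 1" using injR by (meson injD)
    then have "axis l (1::real) $ l = (c *\<^sub>R axis l' 1) $ l" by simp
    then show False using ne by (simp add: axis_def)
  qed
  have "rows (row_normalize X) = range rn"
  proof -
    have "rows (row_normalize X) = range (\<lambda>i. rn (g i))"
      by (auto simp: rows_def rowXs)
    also have "\<dots> = range rn" using comm_nonempty by (metis image_comp surj_id image_image)
    finally show ?thesis .
  qed
  then have "card (rows (row_normalize X)) = CARD('k)"
    using \<open>inj rn\<close> by (simp add: card_image)
  then show ?thesis unfolding X_def[symmetric] using rowXs by simp
qed

end
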